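(* Let $f=\frac1n\sum_{i=1}^nf_i$ with each $f_i:\mathbb{R}^d\to\mathbb{R}$ differentiable and $\nabla f_i$ $L_i$-Lipschitz. Fix a proper sampling with marginals $p_i$ and pair matrix $\mathbf P$, and $v\in\mathbb{R}^n$ with $\mathbf P-pp^\top\preceq\mathrm{Diag}(p_1v_1,\dots,p_nv_n)$, and let $Q=\sum_{i=1}^n\frac{v_iL_i^2}{p_in^2}$. For the iterates of ProxSARAH-AS (any stepsize $\eta>0$, any inner length $m$), for every $j\ge1$ and $1\le t\le m$, $$E\big[\|\mathcal V_t^{(j)}-\nabla f(x_t^{(j)})\|^2\big]\le Q\sum_{k=1}^tE\big[\|x_k^{(j)}-x_{k-1}^{(j)}\|^2\big].$$
   Context: A sampling is a random subset $S\subseteq[n]$ with $p_i=\mathrm{Prob}(i\in S)>0$ and $\mathbf P_{ij}=\mathrm{Prob}(\{i,j\}\subseteq S)$; $\preceq$ is the positive semidefinite order. $r:\mathbb{R}^d\to\mathbb{R}$ has proximal mapping $\mathrm{prox}_{\eta r}(y)=\arg\min_x\{\frac1{2\eta}\|x-y\|^2+r(x)\}$ (nonempty). ProxSARAH-AS: for $j=1,2,\dots$: $x_0^{(j)}=\tilde x^{(j)}$, $\mathcal V_0^{(j)}=\frac1n\sum_i\nabla f_i(x_0^{(j)})$, $x_1^{(j)}=x_0^{(j)}$; for $t=1,\dots,m$: draw $S_t^{(j)}$ from the sampling independently of the past, $\mathcal V_t^{(j)}=\sum_{i\in S_t^{(j)}}\frac1{np_i}(\nabla f_i(x_t^{(j)})-\nabla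 f_i(x_{t-1}^{(j)}))+\mathcal V_{t-1}^{(j)}$, $x_{t+1}^{(j)}\in\mathrm{prox}_{\eta r}(x_t^{(j)}-\eta\mathcal V_t^{(j)})$; then $\tilde x^{(j+1)}=x_{m+1}^{(j)}$. *)

theory Defs
  imports "HOL-Probability.Probability"
begin

definition marg :: "nat set pmf \<Rightarrow> nat \<Rightarrow> real" where
  "marg samp i = measure_pmf.prob samp {S. i \<in> S}"

definition pairprob :: "nat set pmf \<Rightarrow> nat \<Rightarrow> nat \<Rightarrow> real" where
  "pairprob samp i j = measure_pmf.prob samp {S. i \<in> S \<and> j \<in> S}"

definition loewner_le :: "nat \<Rightarrow> (nat \<Rightarrow> nat \<Rightarrow> real) \<Rightarrow> (nat \<Rightarrow> nat \<Rightarrow> real) \<Rightarrow> bool" where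
  "loewner_le n A B \<longleftrightarrow>
     (\<forall>x::nat \<Rightarrow> real. (\<Sum>i\<in>{1..n}. \<Sum>j\<in>{1..n}. x i * (B i j - A i j) * x j) \<ge> 0)"

definition diag_mat :: "(nat \<Rightarrow> real) \<Rightarrow> nat \<Rightarrow> nat \<Rightarrow> real" where
  "diag_mat d i j = (if i = j then d i else 0)"

definition prox_set :: "real \<Rightarrow> ('a::real_normed_vector \<Rightarrow> real) \<Rightarrow> 'a \<Rightarrow> 'a set" where
  "prox_set \<eta> r y = {x. \<forall>z. 1 / (2 * \<eta>) * (norm (x - y))\<^sup>2 + r x \<le> 1 / (2 * \<eta>) * (norm (z - y))\<^sup>2 + r z}"

text \<open>Parameters: n, gradients g i of f_i, marginals p, stepsize eta, inner length m,
  prox selection sel j t (picks x_{t+1}^{(j)} from the prox set), initial point x0,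
  and the sample path om (om (j,t) = S_t^{(j)}).
  sarah_st ... j t = (x_t^{(j)}, V_t^{(j)}, x_{t+1}^{(j)}).
  Epochs are numbered from 1; epoch 0 is a dummy copy of the initial data and is never used.\<close>

fun sarah_st ::
  "nat \<Rightarrow> (nat \<Rightarrow> 'a::real_inner \<Rightarrow> 'a) \<Rightarrow> (nat \<Rightarrow> real) \<Rightarrow> real \<Rightarrow> nat
   \<Rightarrow> (nat \<Rightarrow> nat \<Rightarrow> 'a \<Rightarrow> 'a) \<Rightarrow> 'a \<Rightarrow> (nat \<times> nat \<Rightarrow> nat set) \<Rightarrow> nat \<Rightarrow> nat \<Rightarrow> 'a \<times> 'a \<times> 'a"
  where
  "sarah_st n g p \<eta> m sel x0 om 0 0 =
     (x0, (1 / real n) *\<^sub>R (\<Sum>i\<in>{1..n}. g i x0), x0)"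
| "sarah_st n g p \<eta> m sel x0 om (Suc 0) 0 =
     (x0, (1 / real n) *\<^sub>R (\<Sum>i\<in>{1..n}. g i x0), x0)"
| "sarah_st n g p \<eta> m sel x0 om (Suc (Suc j)) 0 =
     (let xt = snd (snd (sarah_st n g p \<eta> m sel x0 om (Suc j) m))
      in (xt, (1 / real n) *\<^sub>R (\<Sum>i\<in>{1..n}. g i xt), xt))"
| "sarah_st n g p \<eta> m sel x0 om j (Suc t) =
     (let (xprev, Vprev, xcur) = sarah_st n g p \<eta> m sel x0 om j t;
          V = (\<Sum>i\<in>om (j, Suc t). (1 / (real n * p i)) *\<^sub>R (g i xcur - g i xprev)) + Vprev
      in (xcur, V, sel j (Suc t) (xcur - \<eta> *\<^sub>R V)))"

definition sarah_x where
  "sarah_x n g p \<eta> m sel x0 om j t = fst (sarah_st n g p \<eta> m sel x0 om j t)"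

definition sarah_V where
  "sarah_V n g p \<eta> m sel x0 om j t = fst (snd (sarah_st n g p \<eta> m sel x0 om j t))"

end

theory Submission
  imports Defs
begin


lemma split_PiM:
  fixes samp :: "'s pmf" and a :: "'i" and F :: "('i \<Rightarrow> 's) \<Rightarrow> real"
  defines "M \<equiv> PiM UNIV (\<lambda>_. measure_pmf samp)"
  defines "N \<equiv> PiM (UNIV - {a}) (\<lambda>_. measure_pmf samp)"
  assumes F: "integrable M F"
  shows "integral\<^sup>L M F = (\<integral>X. (\<integral>S. F (X(a:=S)) \<partial>samp) \<partial>N)"
    and "integrable N (\<lambda>X. \<integral>S. F (X(a:=S)) \<partial>samp)"
proof -
  have ins: "insert a (UNIV - {a}) = UNIV" by auto
  have D: "distr (measure_pmf samp \<Otimes>\<^sub>M N) M (\<lambda>(x, X). X(a := x)) = M"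
    using distr_pair_PiM_eq_PiM[of "UNIV - {a}" "\<lambda>_. measure_pmf samp" a]
    unfolding M_def N_def ins by (simp add: prob_space_measure_pmf)
  have meas: "(\<lambda>(x, X). X(a := x)) \<in> measurable (measure_pmf samp \<Otimes>\<^sub>M N) M"
    unfolding M_def N_def
  proof (rule measurable_PiM_single')
    fix i :: 'i
    show "(\<lambda>\<omega>. (case \<omega> of (x, X) \<Rightarrow> X(a := x)) i) \<in> measure_pmf samp \<Otimes>\<^sub>M Pi\<^sub>M (UNIV - {a}) (\<lambda>_. measure_pmf samp) \<rightarrow>\<^sub>M measure_pmf samp"
    proof (cases "i = a")
      case True then show ?thesis by (simp add: case_prod_beta')
    next
      case False
      have "(\<lambda>\<omega>. snd \<omega> i) \<in> measure_pmf samp \<Otimes>\<^sub>M Pi\<^sub>M (UNIV - {a}) (\<lambda>_. measure_pmf samp) \<rightarrow>\<^sub>M measure_pmf samp"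
        using False by (intro measurable_compose[OF measurable_snd] measurable_component_singleton) auto
      then show ?thesis using False by (simp add: case_prod_beta')
    qed
  qed (auto simp: space_PiM)
  interpret N: prob_space N unfolding N_def by (intro prob_space_PiM) (simp add: prob_space_measure_pmf)
  interpret P: pair_sigma_finite "measure_pmf samp" N
    by (simp add: N.sigma_finite_measure_axioms pair_sigma_finite.intro prob_space_imp_sigma_finite prob_space_measure_pmf)
  have Fm: "F \<in> borel_measurable M" using F by auto
  have I2: "integrable (measure_pmf samp \<Otimes>\<^sub>M N) (\<lambda>(x, X). F (X(a := x)))"
    using F integrable_distr_eq[OF meas Fm] D by (simp add: case_prod_beta')
  have "integral\<^sup>L M F = integral\<^sup>L (measure_pmf samp \<Otimes>\<^sub>M N) (\<lambda>(x, X). F (X(a := x)))"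
    using integral_distr[OF meas Fm] D by (simp add: case_prod_beta')
  also have "\<dots> = (\<integral>S. (\<integral>X. F (X(a:=S)) \<partial>N) \<partial>samp)"
    using P.integral_fst'[OF I2] by simp
  also have "\<dots> = (\<integral>X. (\<integral>S. F (X(a:=S)) \<partial>samp) \<partial>N)"
    using P.Fubini_integral[of "\<lambda>S X. F (X(a:=S))"] I2 by simp
  finally show "integral\<^sup>L M F = (\<integral>X. (\<integral>S. F (X(a:=S)) \<partial>samp) \<partial>N)" .
  show "integrable N (\<lambda>X. \<integral>S. F (X(a:=S)) \<partial>samp)"
    using P.integrable_snd[of "\<lambda>S X. F (X(a:=S))"] I2 by simp
qed


definition stepf where
  "stepf n g p \<eta> sel j t w S =
     (let (xprev, Vprev, xcur) = w;
          V = (\<Sum>i\<in>S. (1 / (real n * p i)) *\<^sub>R (g i xcur - g i xprev)) + Vprev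
      in (xcur, V, sel j (Suc t) (xcur - \<eta> *\<^sub>R V)))"

definition restartf where
  "restartf n g w = (let xt = snd (snd w) in (xt, (1 / real n) *\<^sub>R (\<Sum>i\<in>{1..n}. g i xt), xt))"

lemma st_Suc: "sarah_st n g p \<eta> m sel x0 om j (Suc t) =
   stepf n g p \<eta> sel j t (sarah_st n g p \<eta> m sel x0 om j t) (om (j, Suc t))"
  unfolding stepf_def sarah_st.simps(4) ..

lemma st_SS0: "sarah_st n g p \<eta> m sel x0 om (Suc (Suc j)) 0 = restartf n g (sarah_st n g p \<eta> m sel x0 om (Suc j) m)"
  unfolding restartf_def sarah_st.simps(3) ..

lemma stepf_fin: "stepf n g p \<eta> sel j t w S = stepf n g p \<eta> sel j t w (if finite S then S else {})"
  by (cases "finite S") (simp_all add: stepf_def)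

lemma st_dep:
  "(\<And>j' t'. j' < j \<or> (j' = j \<and> t' \<le> t) \<Longrightarrow> om (j', t') = om' (j', t')) \<Longrightarrow>
   sarah_st n g p \<eta> m sel x0 om j t = sarah_st n g p \<eta> m sel x0 om' j t"
proof (induction n g p \<eta> m sel x0 om j t arbitrary: om' rule: sarah_st.induct)
  case (3 n g p \<eta> m sel x0 om j)
  have "sarah_st n g p \<eta> m sel x0 om (Suc j) m = sarah_st n g p \<eta> m sel x0 om' (Suc j) m"
    by (rule 3(1)) (use 3(2) in auto)
  then show ?case by (simp only: st_SS0)
next
  case (4 n g p \<eta> m sel x0 om j t)
  have "sarah_st n g p \<eta> m sel x0 om j t = sarah_st n g p \<eta> m sel x0 om' j t"
    by (rule 4(1)) (use 4(2) in auto)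
  moreover have "om (j, Suc t) = om' (j, Suc t)" using 4(2) by auto
  ultimately show ?case by (simp only: st_Suc)
qed auto

lemma st_props:
  fixes samp :: "nat set pmf"
  shows "countable (range (\<lambda>om. sarah_st n g p \<eta> m sel x0 om j t)) \<and>
    (\<lambda>om. sarah_st n g p \<eta> m sel x0 om j t) \<in> PiM UNIV (\<lambda>_. measure_pmf samp) \<rightarrow>\<^sub>M count_space UNIV \<and>
    (finite (set_pmf samp) \<longrightarrow> finite ((\<lambda>om. sarah_st n g p \<eta> m sel x0 om j t) ` {om. \<forall>a. om a \<in> set_pmf samp}))"
proof (induction n g p \<eta> m sel x0 "undefined :: nat \<times> nat \<Rightarrow> nat set" j t rule: sarah_st.induct)
  case (1 n g p \<eta> m sel x0)
  have r: "range (\<lambda>om. sarah_st n g p \<eta> m sel x0 om 0 0) \<subseteq> {(x0, (1 / real n) *\<^sub>R (\<Sum>i\<in>{1..n}. g i x0), x0)}"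
    by auto
  show ?case by (auto intro: countable_subset[OF r] finite_subset[OF _ finite.insertI[OF finite.emptyI]])
next
  case (2 n g p \<eta> m sel x0)
  have r: "range (\<lambda>om. sarah_st n g p \<eta> m sel x0 om (Suc 0) 0) \<subseteq> {(x0, (1 / real n) *\<^sub>R (\<Sum>i\<in>{1..n}. g i x0), x0)}"
    by auto
  show ?case by (auto intro: countable_subset[OF r] finite_subset[OF _ finite.insertI[OF finite.emptyI]])
next
  case (3 n g p \<eta> m sel x0 j)
  let ?f = "\<lambda>om. sarah_st n g p \<eta> m sel x0 om (Suc j) m"
  have e: "(\<lambda>om. sarah_st n g p \<eta> m sel x0 om (Suc (Suc j)) 0) = (\<lambda>om. restartf n g (?f om))"
    by (simp only: st_SS0)
  have r: "range (\<lambda>om. restartf n g (?f om)) = restartf n g ` range ?f" by auto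
  have G: "(\<lambda>om. restartf n g (?f om)) ` G = restartf n g ` (?f ` G)" for G by auto
  show ?case unfolding e r G using 3
    by (auto intro: measurable_compose[where g="restartf n g"])
next
  case (4 n g p \<eta> m sel x0 j t)
  let ?f = "\<lambda>om. sarah_st n g p \<eta> m sel x0 om j t"
  let ?h = "\<lambda>(w, S). stepf n g p \<eta> sel j t w S"
  have IH: "countable (range ?f)" "?f \<in> PiM UNIV (\<lambda>_. measure_pmf samp) \<rightarrow>\<^sub>M count_space UNIV"
    "finite (set_pmf samp) \<Longrightarrow> finite (?f ` {om. \<forall>a. om a \<in> set_pmf samp})"
    using 4 by auto
  have e: "(\<lambda>om. sarah_st n g p \<eta> m sel x0 om j (Suc t)) = (\<lambda>om. stepf n g p \<eta> sel j t (?f om) (om (j, Suc t)))"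
    by (simp only: st_Suc)
  have r: "range (\<lambda>om. stepf n g p \<eta> sel j t (?f om) (om (j, Suc t))) \<subseteq> ?h ` (range ?f \<times> Collect finite)"
  proof -
    have "stepf n g p \<eta> sel j t (?f om) (om (j, Suc t)) \<in> ?h ` (range ?f \<times> Collect finite)" for om
      by (subst stepf_fin) (rule image_eqI[where x="(?f om, if finite (om (j, Suc t)) then om (j, Suc t) else {})"], auto)
    then show ?thesis by blast
  qed
  have c: "countable (range (\<lambda>om. stepf n g p \<eta> sel j t (?f om) (om (j, Suc t))))"
    by (rule countable_subset[OF r]) (intro countable_image countable_SIGMA IH countable_Collect_finite)
  have m: "(\<lambda>om. stepf n g p \<eta> sel j t (?f om) (om (j, Suc t))) \<in> PiM UNIV (\<lambda>_. measure_pmf samp) \<rightarrow>\<^sub>M count_space UNIV"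
  proof (rule measurable_compose_countable'[where f="\<lambda>w om. stepf n g p \<eta> sel j t w (om (j, Suc t))" and g = ?f and I="range ?f"])
    fix w
    show "(\<lambda>om. stepf n g p \<eta> sel j t w (om (j, Suc t))) \<in> PiM UNIV (\<lambda>_. measure_pmf samp) \<rightarrow>\<^sub>M count_space UNIV"
      by (rule measurable_compose[OF measurable_component_singleton[of "(j, Suc t)" UNIV "\<lambda>_. measure_pmf samp"]]) auto
  next
    show "?f \<in> PiM UNIV (\<lambda>_. measure_pmf samp) \<rightarrow>\<^sub>M count_space (range ?f)"
      by (rule measurable_count_space_extend[OF subset_UNIV _ IH(2)]) auto
  qed (rule IH(1))
  have f: "finite ((\<lambda>om. stepf n g p \<eta> sel j t (?f om) (om (j, Suc t))) ` {om. \<forall>a. om a \<in> set_pmf samp})"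
    if fin: "finite (set_pmf samp)"
  proof -
    have "(\<lambda>om. stepf n g p \<eta> sel j t (?f om) (om (j, Suc t))) ` {om. \<forall>a. om a \<in> set_pmf samp}
       \<subseteq> ?h ` (?f ` {om. \<forall>a. om a \<in> set_pmf samp} \<times> set_pmf samp)"
    proof (rule image_subsetI)
      fix om :: "nat \<times> nat \<Rightarrow> nat set" assume om: "om \<in> {om. \<forall>a. om a \<in> set_pmf samp}"
      show "stepf n g p \<eta> sel j t (?f om) (om (j, Suc t)) \<in> ?h ` (?f ` {om. \<forall>a. om a \<in> set_pmf samp} \<times> set_pmf samp)"
        by (rule image_eqI[where x="(?f om, om (j, Suc t))"]) (use om in auto)
    qed
    then show ?thesis by (rule finite_subset) (intro finite_imageI finite_SigmaI IH(3) fin)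
  qed
  show ?case unfolding e using c m f by blast
qed

lemma AE_good:
  fixes samp :: "'s pmf"
  shows "AE om in PiM (UNIV :: ('i::countable) set) (\<lambda>_. measure_pmf samp). \<forall>a. om a \<in> set_pmf samp"
proof (subst AE_all_countable, intro allI)
  fix a :: 'i
  show "AE om in PiM UNIV (\<lambda>_. measure_pmf samp). om a \<in> set_pmf samp"
    by (rule AE_PiM_component[where I=UNIV]) (auto simp: prob_space_measure_pmf AE_measure_pmf)
qed

lemma st_integrable:
  fixes samp :: "nat set pmf" and h :: "_ \<Rightarrow> real"
  assumes fin: "finite (set_pmf samp)"
  shows "integrable (PiM UNIV (\<lambda>_. measure_pmf samp)) (\<lambda>om. h (sarah_st n g p \<eta> m sel x0 om j t))"
proof -
  let ?M = "PiM (UNIV :: (nat \<times> nat) set) (\<lambda>_. measure_pmf samp)"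
  let ?f = "\<lambda>om. sarah_st n g p \<eta> m sel x0 om j t"
  let ?K = "?f ` {om. \<forall>a. om a \<in> set_pmf samp}"
  interpret prob_space ?M by (intro prob_space_PiM) (simp add: prob_space_measure_pmf)
  have P: "countable (range ?f)" "?f \<in> ?M \<rightarrow>\<^sub>M count_space UNIV" "finite ?K"
    using st_props[of n g p \<eta> m sel x0 j t samp] fin by auto
  show ?thesis
  proof (rule integrable_const_bound[where B="\<Sum>w\<in>?K. \<bar>h w\<bar>"])
    show "AE om in ?M. norm (h (?f om)) \<le> (\<Sum>w\<in>?K. \<bar>h w\<bar>)"
      using AE_good[of samp]
    proof eventually_elim
      case (elim om)
      then have "?f om \<in> ?K" by auto
      then show ?case using P(3) by (simp add: member_le_sum[where f="\<lambda>w. \<bar>h w\<bar>", simplified])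
    qed
    show "(\<lambda>om. h (?f om)) \<in> borel_measurable ?M"
      by (rule measurable_compose[OF P(2)]) simp
  qed
qed


lemma eso_diag:
  assumes "loewner_le n A (diag_mat d)" "i \<in> {1..n}"
  shows "A i i \<le> d i"
proof -
  have "0 \<le> (\<Sum>a\<in>{1..n}. \<Sum>b\<in>{1..n}. (if a = i then 1 else 0) * (diag_mat d a b - A a b) * (if b = i then 1 else 0))"
    using spec[OF assms(1)[unfolded loewner_le_def], of "\<lambda>a. if a = i then 1 else 0"] by simp
  also have "\<dots> = d i - A i i"
  proof -
    have h: "\<And>a b. (if a = i then 1 else 0) * (diag_mat d a b - A a b) * (if b = i then 1 else (0::real)) = (if a = i then (if b = i then diag_mat d a b - A a b else 0) else 0)"
      by simp
    have "(\<Sum>a\<in>{1..n}. \<Sum>b\<in>{1..n}. (if a = i then 1 else 0) * (diag_mat d a b - A a b) * (if b = i then 1 else (0::real)))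
       = (\<Sum>a\<in>{1..n}. if a = i then d i - A i i else 0)"
    proof (rule sum.cong[OF refl])
      fix a
      have "(\<Sum>b\<in>{1..n}. (if a = i then 1 else 0) * (diag_mat d a b - A a b) * (if b = i then 1 else (0::real)))
          = (\<Sum>b\<in>{1..n}. if b = i then (if a = i then d i - A i i else 0) else 0)"
        by (rule sum.cong[OF refl]) (auto simp: diag_mat_def)
      then show "(\<Sum>b\<in>{1..n}. (if a = i then 1 else 0) * (diag_mat d a b - A a b) * (if b = i then 1 else (0::real)))
          = (if a = i then d i - A i i else 0)" using assms(2) by simp
    qed
    then show ?thesis using assms(2) by simp
  qed
  finally show ?thesis by simp
qed

lemma eso_vec:
  fixes y :: "nat \<Rightarrow> real ^ 'd"
  assumes "loewner_le n A (diag_mat d)"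
  shows "(\<Sum>i\<in>{1..n}. \<Sum>k\<in>{1..n}. A i k * (y i \<bullet> y k)) \<le> (\<Sum>i\<in>{1..n}. d i * (norm (y i))\<^sup>2)"
proof -
  have c: "(\<Sum>i\<in>{1..n}. \<Sum>k\<in>{1..n}. A i k * (y i $ c * y k $ c)) \<le> (\<Sum>i\<in>{1..n}. d i * (y i $ c)\<^sup>2)" for c
  proof -
    have "0 \<le> (\<Sum>i\<in>{1..n}. \<Sum>k\<in>{1..n}. y i $ c * (diag_mat d i k - A i k) * y k $ c)"
      using spec[OF assms(1)[unfolded loewner_le_def], of "\<lambda>a. y a $ c"] by simp
    also have "\<dots> = (\<Sum>i\<in>{1..n}. \<Sum>k\<in>{1..n}. y i $ c * diag_mat d i k * y k $ c) - (\<Sum>i\<in>{1..n}. \<Sum>k\<in>{1..n}. A i k * (y i $ c * y k $ c))"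
      by (simp add: sum_subtractf[symmetric] algebra_simps)
    also have "(\<Sum>i\<in>{1..n}. \<Sum>k\<in>{1..n}. y i $ c * diag_mat d i k * y k $ c) = (\<Sum>i\<in>{1..n}. d i * (y i $ c)\<^sup>2)"
    proof (rule sum.cong[OF refl])
      fix i assume i: "i \<in> {1..n}"
      have "(\<Sum>k\<in>{1..n}. y i $ c * diag_mat d i k * y k $ c) = (\<Sum>k\<in>{1..n}. if i = k then d i * (y i $ c)\<^sup>2 else 0)"
        by (intro sum.cong refl) (auto simp: diag_mat_def power2_eq_square)
      also have "\<dots> = d i * (y i $ c)\<^sup>2" using i by simp
      finally show "(\<Sum>k\<in>{1..n}. y i $ c * diag_mat d i k * y k $ c) = d i * (y i $ c)\<^sup>2" .
    qed
    finally show ?thesis by simp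
  qed
  have "(\<Sum>i\<in>{1..n}. \<Sum>k\<in>{1..n}. A i k * (y i \<bullet> y k)) = (\<Sum>c\<in>UNIV. \<Sum>i\<in>{1..n}. \<Sum>k\<in>{1..n}. A i k * (y i $ c * y k $ c))"
    by (simp add: inner_vec_def sum_distrib_left sum.swap[where A=UNIV])
  also have "\<dots> \<le> (\<Sum>c\<in>UNIV. \<Sum>i\<in>{1..n}. d i * (y i $ c)\<^sup>2)"
    by (rule sum_mono) (rule c)
  also have "\<dots> = (\<Sum>i\<in>{1..n}. \<Sum>c\<in>UNIV. d i * (y i $ c)\<^sup>2)"
    by (rule sum.swap)
  also have "\<dots> = (\<Sum>i\<in>{1..n}. d i * (norm (y i))\<^sup>2)"
  proof -
    have nrm: "(norm (y i))\<^sup>2 = (\<Sum>c\<in>UNIV. (y i $ c)\<^sup>2)" for i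
      unfolding power2_norm_eq_inner by (simp add: inner_vec_def power2_eq_square)
    show ?thesis by (simp add: nrm sum_distrib_left)
  qed
  finally show ?thesis .
qed

lemma inner_bound:
  fixes samp :: "nat set pmf" and g :: "nat \<Rightarrow> real ^ 'd \<Rightarrow> real ^ 'd" and L v :: "nat \<Rightarrow> real"
    and xp xc Vp gfp gfc :: "real ^ 'd" and n :: nat
  assumes samp_sub: "\<And>S. S \<in> set_pmf samp \<Longrightarrow> S \<subseteq> {1..n}"
    and proper: "\<And>i. i \<in> {1..n} \<Longrightarrow> marg samp i > 0"
    and ESO: "loewner_le n (\<lambda>i k. pairprob samp i k - marg samp i * marg samp k)
                           (diag_mat (\<lambda>i. marg samp i * v i))"
    and lip: "\<And>i. i \<in> {1..n} \<Longrightarrow> norm (g i xc - g i xp) \<le> L i * norm (xc - xp)"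
    and gfc: "gfc = (1 / real n) *\<^sub>R (\<Sum>i\<in>{1..n}. g i xc)"
    and gfp: "gfp = (1 / real n) *\<^sub>R (\<Sum>i\<in>{1..n}. g i xp)"
  shows "(\<integral>S. (norm ((\<Sum>i\<in>S. (1 / (real n * marg samp i)) *\<^sub>R (g i xc - g i xp)) + Vp - gfc))\<^sup>2 \<partial>samp)
     \<le> (norm (Vp - gfp))\<^sup>2 + (\<Sum>i\<in>{1..n}. v i * (L i)\<^sup>2 / (marg samp i * (real n)\<^sup>2)) * (norm (xc - xp))\<^sup>2"
proof -
  define p where "p = marg samp"
  define b where "b i = (1 / real n) *\<^sub>R (g i xc - g i xp)" for i
  define D where "D = Vp - gfp"
  define ind where "ind i S = (indicator {S. i \<in> S} S :: real)" for i :: nat and S :: "nat set"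
  define e where "e i S = ind i S / p i - 1" for i S
  have fin: "finite (set_pmf samp)"
    by (rule finite_subset[of _ "Pow {1..n}"]) (use samp_sub in auto)
  have int: "integrable (measure_pmf samp) f" for f :: "nat set \<Rightarrow> real"
    by (rule integrable_measure_pmf_finite[OF fin])
  have pos: "i \<in> {1..n} \<Longrightarrow> p i > 0" for i using proper p_def by auto
  have Eind: "(\<integral>S. ind i S \<partial>samp) = p i" for i
    by (simp add: ind_def p_def marg_def)
  have Eind2: "(\<integral>S. ind i S * ind k S \<partial>samp) = pairprob samp i k" for i k
  proof -
    have "(\<lambda>S. ind i S * ind k S) = indicator {S. i \<in> S \<and> k \<in> S}"
      by (auto simp: ind_def indicator_def)
    then show ?thesis by (simp add: pairprob_def)
  qed
  have Ee: "(\<integral>S. e i S \<partial>samp) = 0" if i: "i \<in> {1..n}" for i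
  proof -
    have "(\<integral>S. e i S \<partial>samp) = (\<integral>S. ind i S \<partial>samp) / p i - 1"
      unfolding e_def using int by simp
    then show ?thesis using Eind pos[OF i] by simp
  qed
  have Eee: "(\<integral>S. e i S * e k S \<partial>samp) = pairprob samp i k / (p i * p k) - 1"
    if i: "i \<in> {1..n}" and k: "k \<in> {1..n}" for i k
  proof -
    have pt: "e i S * e k S = (ind i S * ind k S) / (p i * p k) - ind i S / p i - ind k S / p k + 1" for S
      unfolding e_def using pos[OF i] pos[OF k] by (simp add: field_simps)
    have "(\<integral>S. e i S * e k S \<partial>samp) = (\<integral>S. ind i S * ind k S \<partial>samp) / (p i * p k) - (\<integral>S. ind i S \<partial>samp) / p i - (\<integral>S. ind k S \<partial>samp) / p k + 1"
      unfolding pt using int by simp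
    then show ?thesis using Eind Eind2 pos[OF i] pos[OF k] by simp
  qed
  have expand: "(norm ((\<Sum>i\<in>S. (1 / (real n * marg samp i)) *\<^sub>R (g i xc - g i xp)) + Vp - gfc))\<^sup>2
      = (norm D)\<^sup>2 + 2 * (\<Sum>i\<in>{1..n}. e i S * (D \<bullet> b i)) + (\<Sum>i\<in>{1..n}. \<Sum>k\<in>{1..n}. e i S * e k S * (b i \<bullet> b k))"
    if S: "S \<in> set_pmf samp" for S
  proof -
    have Ssub: "S \<subseteq> {1..n}" using samp_sub[OF S] .
    have a: "(\<Sum>i\<in>S. (1 / (real n * marg samp i)) *\<^sub>R (g i xc - g i xp)) = (\<Sum>i\<in>{1..n}. (ind i S / p i) *\<^sub>R b i)"
    proof -
      have "(\<Sum>i\<in>{1..n}. (ind i S / p i) *\<^sub>R b i) = (\<Sum>i\<in>{1..n}. if i \<in> S then (1 / (real n * marg samp i)) *\<^sub>R (g i xc - g i xp) else 0)"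
        by (rule sum.cong[OF refl]) (auto simp: ind_def b_def p_def)
      also have "\<dots> = (\<Sum>i\<in>{1..n} \<inter> S. (1 / (real n * marg samp i)) *\<^sub>R (g i xc - g i xp))"
        by (simp add: sum.inter_restrict[symmetric] Int_def)
      also have "{1..n} \<inter> S = S" using Ssub by auto
      finally show ?thesis by simp
    qed
    have bsum: "gfc - gfp = (\<Sum>i\<in>{1..n}. b i)"
      unfolding gfc gfp b_def by (simp add: scaleR_diff_right sum_subtractf scaleR_sum_right)
    have vec: "(\<Sum>i\<in>S. (1 / (real n * marg samp i)) *\<^sub>R (g i xc - g i xp)) + Vp - gfc = D + (\<Sum>i\<in>{1..n}. e i S *\<^sub>R b i)"
    proof -
      have "(\<Sum>i\<in>{1..n}. e i S *\<^sub>R b i) = (\<Sum>i\<in>{1..n}. (ind i S / p i) *\<^sub>R b i) - (\<Sum>i\<in>{1..n}. b i)"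
        by (simp add: e_def scaleR_diff_left sum_subtractf)
      then show ?thesis unfolding a D_def using bsum by (simp add: algebra_simps)
    qed
    define W where "W = (\<Sum>i\<in>{1..n}. e i S *\<^sub>R b i)"
    have DW: "D \<bullet> W = (\<Sum>i\<in>{1..n}. e i S * (D \<bullet> b i))"
      unfolding W_def by (simp add: inner_sum_right)
    have WW: "W \<bullet> W = (\<Sum>i\<in>{1..n}. \<Sum>k\<in>{1..n}. e i S * e k S * (b i \<bullet> b k))"
      unfolding W_def by (simp add: inner_sum_right inner_sum_left sum_distrib_left mult.assoc) (intro sum.cong refl, simp add: inner_commute)
    have "(norm (D + W))\<^sup>2 = (norm D)\<^sup>2 + 2 * (D \<bullet> W) + W \<bullet> W"
      by (simp add: power2_norm_eq_inner inner_add_left inner_add_right inner_commute)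
    then show ?thesis unfolding vec W_def[symmetric] DW WW .
  qed
  have "(\<integral>S. (norm ((\<Sum>i\<in>S. (1 / (real n * marg samp i)) *\<^sub>R (g i xc - g i xp)) + Vp - gfc))\<^sup>2 \<partial>samp)
      = (\<integral>S. (norm D)\<^sup>2 + 2 * (\<Sum>i\<in>{1..n}. e i S * (D \<bullet> b i)) + (\<Sum>i\<in>{1..n}. \<Sum>k\<in>{1..n}. e i S * e k S * (b i \<bullet> b k)) \<partial>samp)"
    by (rule integral_cong_AE) (auto simp: AE_measure_pmf_iff expand)
  also have "\<dots> = (norm D)\<^sup>2 + 2 * (\<Sum>i\<in>{1..n}. (\<integral>S. e i S \<partial>samp) * (D \<bullet> b i)) + (\<Sum>i\<in>{1..n}. \<Sum>k\<in>{1..n}. (\<integral>S. e i S * e k S \<partial>samp) * (b i \<bullet> b k))"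
    using int by (simp add: integral_sum)
  also have "\<dots> = (norm D)\<^sup>2 + (\<Sum>i\<in>{1..n}. \<Sum>k\<in>{1..n}. (pairprob samp i k / (p i * p k) - 1) * (b i \<bullet> b k))"
  proof -
    have s1: "(\<Sum>i\<in>{1..n}. (\<integral>S. e i S \<partial>samp) * (D \<bullet> b i)) = 0"
      by (rule sum.neutral) (simp add: Ee)
    have s2: "(\<Sum>i\<in>{1..n}. \<Sum>k\<in>{1..n}. (\<integral>S. e i S * e k S \<partial>samp) * (b i \<bullet> b k))
       = (\<Sum>i\<in>{1..n}. \<Sum>k\<in>{1..n}. (pairprob samp i k / (p i * p k) - 1) * (b i \<bullet> b k))"
      by (intro sum.cong refl) (simp add: Eee)
    show ?thesis unfolding s1 s2 by simp
  qed
  also have "(\<Sum>i\<in>{1..n}. \<Sum>k\<in>{1..n}. (pairprob samp i k / (p i * p k) - 1) * (b i \<bullet> b k))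
      = (\<Sum>i\<in>{1..n}. \<Sum>k\<in>{1..n}. (pairprob samp i k - p i * p k) * ((1 / p i) *\<^sub>R b i \<bullet> (1 / p k) *\<^sub>R b k))"
  proof (intro sum.cong refl)
    fix i k assume i: "i \<in> {1..n}" and k: "k \<in> {1..n}"
    have "p i > 0" "p k > 0" using pos i k by auto
    then show "(pairprob samp i k / (p i * p k) - 1) * (b i \<bullet> b k) = (pairprob samp i k - p i * p k) * ((1 / p i) *\<^sub>R b i \<bullet> (1 / p k) *\<^sub>R b k)"
      by (simp add: field_simps)
  qed
  also have "\<dots> \<le> (\<Sum>i\<in>{1..n}. (p i * v i) * (norm ((1 / p i) *\<^sub>R b i))\<^sup>2)"
    using eso_vec[OF ESO[folded p_def], of "\<lambda>i. (1 / p i) *\<^sub>R b i"] by simp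
  also have "\<dots> \<le> (\<Sum>i\<in>{1..n}. v i * (L i)\<^sup>2 / (p i * (real n)\<^sup>2) * (norm (xc - xp))\<^sup>2)"
  proof (rule sum_mono)
    fix i assume i: "i \<in> {1..n}"
    have "pairprob samp i i - p i * p i \<le> p i * v i"
      using eso_diag[OF ESO[folded p_def] i] by simp
    moreover have "pairprob samp i i = p i" by (simp add: pairprob_def p_def marg_def)
    moreover have "p i \<le> 1" unfolding p_def marg_def by simp
    moreover have "p i * p i \<le> p i * 1"
      by (rule mult_left_mono) (use pos[OF i] \<open>p i \<le> 1\<close> in auto)
    ultimately have "0 \<le> p i * v i" by simp
    then have v: "v i \<ge> 0" using pos[OF i] by (simp add: zero_le_mult_iff)
    have nb: "norm (b i) \<le> L i * norm (xc - xp) / real n"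
      unfolding b_def using lip[OF i] by (simp add: divide_right_mono)
    have nb2: "(norm (b i))\<^sup>2 \<le> (L i)\<^sup>2 * (norm (xc - xp))\<^sup>2 / (real n)\<^sup>2"
      using power_mono[OF nb norm_ge_zero, of 2] by (simp add: power_divide power_mult_distrib)
    have "(p i * v i) * (norm ((1 / p i) *\<^sub>R b i))\<^sup>2 = v i / p i * (norm (b i))\<^sup>2"
      using pos[OF i] by (simp add: power2_eq_square field_simps)
    also have "\<dots> \<le> v i / p i * ((L i)\<^sup>2 * (norm (xc - xp))\<^sup>2 / (real n)\<^sup>2)"
      by (rule mult_left_mono[OF nb2]) (use v pos[OF i] in simp)
    also have "\<dots> = v i * (L i)\<^sup>2 / (p i * (real n)\<^sup>2) * (norm (xc - xp))\<^sup>2"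
      by (simp add: field_simps)
    finally show "(p i * v i) * (norm ((1 / p i) *\<^sub>R b i))\<^sup>2 \<le> v i * (L i)\<^sup>2 / (p i * (real n)\<^sup>2) * (norm (xc - xp))\<^sup>2" .
  qed
  also have "\<dots> = (\<Sum>i\<in>{1..n}. v i * (L i)\<^sup>2 / (marg samp i * (real n)\<^sup>2)) * (norm (xc - xp))\<^sup>2"
    by (simp add: sum_distrib_right p_def)
  finally show ?thesis unfolding D_def by simp
qed

theorem lemma5p1:
  fixes n m :: nat
    and f :: "nat \<Rightarrow> real ^ 'd \<Rightarrow> real"
    and g :: "nat \<Rightarrow> real ^ 'd \<Rightarrow> real ^ 'd"
    and gf :: "real ^ 'd \<Rightarrow> real ^ 'd"
    and L v :: "nat \<Rightarrow> real"
    and samp :: "nat set pmf"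
    and r :: "real ^ 'd \<Rightarrow> real"
    and \<eta> :: real
    and sel :: "nat \<Rightarrow> nat \<Rightarrow> real ^ 'd \<Rightarrow> real ^ 'd"
    and x0 :: "real ^ 'd"
    and j t :: nat
  assumes grad_fi: "\<And>i x. i \<in> {1..n} \<Longrightarrow> (f i has_derivative (\<lambda>h. g i x \<bullet> h)) (at x)"
    and lip: "\<And>i x y. i \<in> {1..n} \<Longrightarrow> norm (g i x - g i y) \<le> L i * norm (x - y)"
    and grad_f: "\<And>x. ((\<lambda>y. (1 / real n) * (\<Sum>i\<in>{1..n}. f i y)) has_derivative (\<lambda>h. gf x \<bullet> h)) (at x)"
    and samp_sub: "\<And>S. S \<in> set_pmf samp \<Longrightarrow> S \<subseteq> {1..n}"
    and proper: "\<And>i. i \<in> {1..n} \<Longrightarrow> marg samp i > 0"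
    and ESO: "loewner_le n (\<lambda>i k. pairprob samp i k - marg samp i * marg samp k)
                           (diag_mat (\<lambda>i. marg samp i * v i))"
    and eta_pos: "\<eta> > 0"
    and sel: "\<And>j t y. sel j t y \<in> prox_set \<eta> r y"
    and j: "j \<ge> 1"
    and t: "1 \<le> t" "t \<le> m"
  shows
    "(let M = PiM (UNIV :: (nat \<times> nat) set) (\<lambda>_. measure_pmf samp);
          p = marg samp;
          X = sarah_x n g p \<eta> m sel x0;
          V = sarah_V n g p \<eta> m sel x0;
          Q = (\<Sum>i\<in>{1..n}. v i * (L i)\<^sup>2 / (p i * (real n)\<^sup>2))
      in (\<integral>om. (norm (V om j t - gf (X om j t)))\<^sup>2 \<partial>M)
         \<le> Q * (\<Sum>k\<in>{1..t}. \<integral>om. (norm (X om j k - X om j (k - 1)))\<^sup>2 \<partial>M))"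
proof -
  define M where "M = PiM (UNIV :: (nat \<times> nat) set) (\<lambda>_. measure_pmf samp)"
  define p where "p = marg samp"
  define st where "st om jj tt = sarah_st n g p \<eta> m sel x0 om jj tt" for om jj tt
  define Q where "Q = (\<Sum>i\<in>{1..n}. v i * (L i)\<^sup>2 / (p i * (real n)\<^sup>2))"
  have fin: "finite (set_pmf samp)"
    by (rule finite_subset[of _ "Pow {1..n}"]) (use samp_sub in auto)
  have gf_eq: "gf y = (1 / real n) *\<^sub>R (\<Sum>i\<in>{1..n}. g i y)" for y
  proof -
    have u: "(\<lambda>h. gf y \<bullet> h) = (\<lambda>h. (1 / real n) * (\<Sum>i\<in>{1..n}. g i y \<bullet> h))"
      by (rule has_derivative_unique[OF grad_f]) (intro has_derivative_mult_right has_derivative_sum grad_fi, simp)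
    have "gf y \<bullet> h = ((1 / real n) *\<^sub>R (\<Sum>i\<in>{1..n}. g i y)) \<bullet> h" for h
      using fun_cong[OF u, of h] by (simp add: inner_sum_left)
    then have "(gf y - (1 / real n) *\<^sub>R (\<Sum>i\<in>{1..n}. g i y)) \<bullet> (gf y - (1 / real n) *\<^sub>R (\<Sum>i\<in>{1..n}. g i y)) = 0"
      by (simp add: inner_diff_left)
    then show ?thesis by simp
  qed
  have intg: "integrable M (\<lambda>om. h (st om j tt))" for h :: "_ \<Rightarrow> real" and tt
    unfolding M_def st_def by (rule st_integrable[OF fin])
  have Xe: "sarah_x n g p \<eta> m sel x0 om jj tt = fst (st om jj tt)" for om jj tt
    by (simp add: sarah_x_def st_def)
  have Ve: "sarah_V n g p \<eta> m sel x0 om jj tt = fst (snd (st om jj tt))" for om jj tt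
    by (simp add: sarah_V_def st_def)
  have fstS: "fst (st om j (Suc tt)) = snd (snd (st om j tt))" for om tt
    unfolding st_def st_Suc by (simp add: stepf_def Let_def split: prod.split)
  have main: "(\<integral>om. (norm (fst (snd (st om j tt)) - gf (fst (st om j tt))))\<^sup>2 \<partial>M)
     \<le> Q * (\<Sum>k\<in>{1..tt}. \<integral>om. (norm (fst (st om j k) - fst (st om j (k - 1))))\<^sup>2 \<partial>M)" for tt
  proof (induction tt)
    case 0
    obtain j1 where j1: "j = Suc j1" using j by (cases j) auto
    have "fst (snd (st om j 0)) - gf (fst (st om j 0)) = 0" for om
      unfolding st_def j1 by (cases j1) (simp_all add: gf_eq Let_def)
    then show ?case by simp
  next
    case (Suc tt)
    define a where "a = (j, Suc tt)"
    define N where "N = PiM (UNIV - {a}) (\<lambda>_. measure_pmf samp)"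
    define hF where "hF w = (norm (fst (snd w) - gf (fst w)))\<^sup>2" for w :: "(real ^ 'd) \<times> (real ^ 'd) \<times> (real ^ 'd)"
    define hG where "hG w = (norm (fst (snd w) - gf (fst w)))\<^sup>2 + Q * (norm (snd (snd w) - fst w))\<^sup>2"
      for w :: "(real ^ 'd) \<times> (real ^ 'd) \<times> (real ^ 'd)"
    have F1: "(\<integral>om. hF (st om j (Suc tt)) \<partial>M) = (\<integral>X. (\<integral>S. hF (st (X(a:=S)) j (Suc tt)) \<partial>samp) \<partial>N)"
      and F2: "integrable N (\<lambda>X. \<integral>S. hF (st (X(a:=S)) j (Suc tt)) \<partial>samp)"
      using split_PiM[of samp "\<lambda>om. hF (st om j (Suc tt))" a] intg[of hF "Suc tt"] unfolding M_def N_def by auto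
    have G1: "(\<integral>om. hG (st om j tt) \<partial>M) = (\<integral>X. (\<integral>S. hG (st (X(a:=S)) j tt) \<partial>samp) \<partial>N)"
      and G2: "integrable N (\<lambda>X. \<integral>S. hG (st (X(a:=S)) j tt) \<partial>samp)"
      using split_PiM[of samp "\<lambda>om. hG (st om j tt)" a] intg[of hG tt] unfolding M_def N_def by auto
    have pw: "(\<integral>S. hF (st (X(a:=S)) j (Suc tt)) \<partial>samp) \<le> (\<integral>S. hG (st (X(a:=S)) j tt) \<partial>samp)" for X
    proof -
      define w where "w = st (X(a:={})) j tt"
      have dep: "st (X(a:=S)) j tt = w" for S
        unfolding w_def st_def by (rule st_dep) (auto simp: a_def)
      obtain xp Vp xc where wd: "w = (xp, Vp, xc)" by (cases w) auto
      have R: "(\<integral>S. hG (st (X(a:=S)) j tt) \<partial>samp) = (norm (Vp - gf xp))\<^sup>2 + Q * (norm (xc - xp))\<^sup>2"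
        unfolding dep by (simp add: hG_def wd)
      have L: "hF (st (X(a:=S)) j (Suc tt)) = (norm ((\<Sum>i\<in>S. (1 / (real n * marg samp i)) *\<^sub>R (g i xc - g i xp)) + Vp - gf xc))\<^sup>2" for S
      proof -
        have "st (X(a:=S)) j (Suc tt) = stepf n g p \<eta> sel j tt w S"
          unfolding st_def st_Suc using dep[of S] by (simp add: st_def a_def)
        then show ?thesis by (simp add: hF_def stepf_def wd p_def Let_def)
      qed
      have "(\<integral>S. hF (st (X(a:=S)) j (Suc tt)) \<partial>samp) \<le> (norm (Vp - gf xp))\<^sup>2 + Q * (norm (xc - xp))\<^sup>2"
        unfolding L Q_def p_def
        by (rule inner_bound[OF samp_sub proper ESO lip gf_eq gf_eq])
      then show ?thesis unfolding R .
    qed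
    have "(\<integral>om. hF (st om j (Suc tt)) \<partial>M) \<le> (\<integral>om. hG (st om j tt) \<partial>M)"
      unfolding F1 G1 by (rule integral_mono[OF F2 G2 pw])
    also have "(\<integral>om. hG (st om j tt) \<partial>M) = (\<integral>om. (norm (fst (snd (st om j tt)) - gf (fst (st om j tt))))\<^sup>2 \<partial>M)
        + Q * (\<integral>om. (norm (snd (snd (st om j tt)) - fst (st om j tt)))\<^sup>2 \<partial>M)"
      unfolding hG_def
      using intg[of "\<lambda>w. (norm (fst (snd w) - gf (fst w)))\<^sup>2" tt] intg[of "\<lambda>w. Q * (norm (snd (snd w) - fst w))\<^sup>2" tt]
        intg[of "\<lambda>w. (norm (snd (snd w) - fst w))\<^sup>2" tt]
      by simp
    also have "\<dots> \<le> Q * (\<Sum>k\<in>{1..tt}. \<integral>om. (norm (fst (st om j k) - fst (st om j (k - 1))))\<^sup>2 \<partial>M)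
        + Q * (\<integral>om. (norm (snd (snd (st om j tt)) - fst (st om j tt)))\<^sup>2 \<partial>M)"
      using Suc.IH by simp
    also have "\<dots> = Q * (\<Sum>k\<in>{1..Suc tt}. \<integral>om. (norm (fst (st om j k) - fst (st om j (k - 1))))\<^sup>2 \<partial>M)"
      by (simp add: fstS distrib_left)
    finally show ?case unfolding hF_def .

  qed
  show ?thesis
    unfolding Let_def M_def[symmetric] p_def[symmetric] Q_def[symmetric] Xe Ve
    using main[of t] t by simp
qed

end
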